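(* Let $(\Omega,\mathcal{A},\{\mathcal{F}_t\}_{t\ge0},\mathbb{P})$ be a filtered probability space, where $\mathcal{F}_t=\sigma(Z_1(s),\dots,Z_m(s);\,0\le s\le t)$ is generated by finitely many stochastic factors. Let the log-price process $\{P(t)\}$ satisfy $dP(t)=\varsigma(t)\,dB(N(t))$, $t\in[0,T]$, where: (a) $N$ is an $\mathcal{F}_t$-adapted counting process with unit jumps having a positive, $\mathcal{F}_t$-predictable intensity $\lambda$ that is left-continuous with right-hand limits and $\int_0^t\lambda(s)ds<\infty$ a.s. for all $t$; (b) $\{B(n)\}_{n\ge0}$ is a Brownian motion with $B(N(t))$ $\mathcal{F}_t$-adapted; (c) $\varsigma$ is positive, continuous and $\mathcal{F}_t$-predictable. Assume $B$ is independent of $N$ and of $\varsigma$, and that $\mathbb{E}[\int_t^T\varsigma^2(r)\lambda(r)dr\mid\mathcal{F}_t]$, $\mathbb{E}[\varsigma^4(t)]$ and $\mathbb{E}[\int_0^t\varsigma^4(r)\lambda(r)dr]$ exist and are finite for all $t\in[0,T]$. Then $$\mathbb{E}\big[r_{\mathrm{daily}}^2-\mathrm{IV}(0,T)\big]=0,$$ where $r_{\mathrm{daily}}:=P(T)-P(0)$ and $\mathrm{IV}(0,T):=\int_0^T\varsigma^2(r)\lambda(r)\,dr$.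
   Context: The integral $\int_s^t\varsigma(r)\,dB(N(r))$ is defined pathwise as $\sum_{s<t_i\le t}\varsigma(t_i)U_i$, where $t_i$ are the jump times of $N$ and $U_i:=B(N(t_i))-B(N(t_{i-1}))$. *)

theory Defs
  imports "HOL-Probability.Probability"
begin

definition factor_filtration ::
  "'a measure \<Rightarrow> (nat \<Rightarrow> real \<Rightarrow> 'a \<Rightarrow> real) \<Rightarrow> nat \<Rightarrow> real \<Rightarrow> 'a measure" where
  "factor_filtration M Z m t =
     sigma (space M) {Z i s -` A \<inter> space M | i s A. i < m \<and> 0 \<le> s \<and> s \<le> t \<and> A \<in> sets borel}"

definition predictable_sigma :: "(real \<Rightarrow> 'a measure) \<Rightarrow> 'a measure \<Rightarrow> (real \<times> 'a) measure" where
  "predictable_sigma F M =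
     sigma ({0..} \<times> space M)
       ({{0} \<times> A | A. A \<in> sets (F 0)} \<union>
        {{s<..t} \<times> A | s t A. 0 \<le> s \<and> s \<le> t \<and> A \<in> sets (F s)})"

definition predictable :: "(real \<Rightarrow> 'a measure) \<Rightarrow> 'a measure \<Rightarrow> (real \<Rightarrow> 'a \<Rightarrow> real) \<Rightarrow> bool" where
  "predictable F M X \<longleftrightarrow> (\<lambda>(t, \<omega>). X t \<omega>) \<in> borel_measurable (predictable_sigma F M)"

definition counting_process :: "'a measure \<Rightarrow> (real \<Rightarrow> 'a \<Rightarrow> nat) \<Rightarrow> bool" where
  "counting_process M N \<longleftrightarrow>
     (\<forall>t. N t \<in> measurable M (count_space UNIV)) \<and>
     (\<forall>\<omega>\<in>space M.
        N 0 \<omega> = 0 \<and>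
        mono_on {0..} (\<lambda>t. N t \<omega>) \<and>
        (\<forall>t\<ge>0. continuous (at_right t) (\<lambda>s. real (N s \<omega>))) \<and>
        (\<forall>t>0. ((\<lambda>s. real (N s \<omega>)) \<longlongrightarrow> real (N t \<omega>)) (at_left t) \<or>
               ((\<lambda>s. real (N s \<omega>)) \<longlongrightarrow> real (N t \<omega>) - 1) (at_left t)))"

definition jump_times :: "(real \<Rightarrow> 'a \<Rightarrow> nat) \<Rightarrow> 'a \<Rightarrow> real set" where
  "jump_times N \<omega> = {t. 0 < t \<and> \<not> ((\<lambda>s. real (N s \<omega>)) \<longlongrightarrow> real (N t \<omega>)) (at_left t)}"

definition has_intensity ::
  "'a measure \<Rightarrow> (real \<Rightarrow> 'a measure) \<Rightarrow> (real \<Rightarrow> 'a \<Rightarrow> nat) \<Rightarrow> (real \<Rightarrow> 'a \<Rightarrow> real) \<Rightarrow> bool" where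
  "has_intensity M F N lam \<longleftrightarrow>
     predictable F M lam \<and> (\<forall>\<omega>\<in>space M. \<forall>t\<ge>0. 0 \<le> lam t \<omega>) \<and>
     (\<forall>C. predictable F M C \<longrightarrow> (\<forall>\<omega>\<in>space M. \<forall>t\<ge>0. 0 \<le> C t \<omega>) \<longrightarrow>
        (\<forall>t\<ge>0.
          (\<integral>\<^sup>+ \<omega>. ennreal (\<Sum>s\<in>{s\<in>jump_times N \<omega>. s \<le> t}. C s \<omega>) \<partial>M) =
          (\<integral>\<^sup>+ \<omega>. (\<integral>\<^sup>+ s\<in>{0<..t}. ennreal (C s \<omega> * lam s \<omega>) \<partial>lborel) \<partial>M)))"

definition brownian_motion :: "'a measure \<Rightarrow> (real \<Rightarrow> 'a \<Rightarrow> real) \<Rightarrow> bool" where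
  "brownian_motion M B \<longleftrightarrow>
     (\<forall>t. B t \<in> borel_measurable M) \<and>
     (\<forall>\<omega>\<in>space M. B 0 \<omega> = 0 \<and> continuous_on {0..} (\<lambda>t. B t \<omega>)) \<and>
     (\<forall>s t. 0 \<le> s \<longrightarrow> s < t \<longrightarrow>
        distributed M lborel (\<lambda>\<omega>. B t \<omega> - B s \<omega>) (normal_density 0 (sqrt (t - s)))) \<and>
     (\<forall>(ts :: nat \<Rightarrow> real) n. (\<forall>i\<le>n. 0 \<le> ts i) \<longrightarrow> (\<forall>i<n. ts i < ts (Suc i)) \<longrightarrow>
        prob_space.indep_vars M (\<lambda>_. borel) (\<lambda>i \<omega>. B (ts (Suc i)) \<omega> - B (ts i) \<omega>) {..<n})"

text \<open>Pathwise integral int_(s,t] sig(r) dB(N(r)) = sum over jump times t_i in (s,t] of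
  sig(t_i) U_i, with U_i = B(N(t_i)) - B(N(t_{i-1})) = B(N(t_i)) - B(N(t_i) - 1) (unit jumps).\<close>
definition jump_integral ::
  "(real \<Rightarrow> 'a \<Rightarrow> nat) \<Rightarrow> (real \<Rightarrow> 'a \<Rightarrow> real) \<Rightarrow> (real \<Rightarrow> 'a \<Rightarrow> real) \<Rightarrow> real \<Rightarrow> real \<Rightarrow> 'a \<Rightarrow> real" where
  "jump_integral N B sig s t \<omega> =
     (\<Sum>u\<in>{u\<in>jump_times N \<omega>. s < u \<and> u \<le> t}.
        sig u \<omega> * (B (real (N u \<omega>)) \<omega> - B (real (N u \<omega>) - 1) \<omega>))"

end

theory Submission
  imports Defs
begin


lemma nat_close_eq:
  fixes a b :: nat
  assumes "dist (real a) (real b) < 1/2" shows "a = b"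
proof (rule ccontr)
  assume "a \<noteq> b"
  then have "a + 1 \<le> b \<or> b + 1 \<le> a" by linarith
  then have "real a + 1 \<le> real b \<or> real b + 1 \<le> real a" by linarith
  then show False using assms by (auto simp: dist_real_def)
qed

lemma rc_eventually:
  fixes f :: "real \<Rightarrow> nat"
  assumes "continuous (at_right t) (\<lambda>s. real (f s))"
  shows "eventually (\<lambda>s. f s = f t) (at_right t)"
proof -
  have "((\<lambda>s. real (f s)) \<longlongrightarrow> real (f t)) (at_right t)"
    using assms by (simp add: continuous_within)
  then have "eventually (\<lambda>s. dist (real (f s)) (real (f t)) < 1/2) (at_right t)"
    by (rule tendstoD) simp
  then show ?thesis by eventually_elim (rule nat_close_eq)
qed

locale cpath =
  fixes f :: "real \<Rightarrow> nat"
  assumes f0: "f 0 = 0"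
    and fmono: "mono_on {0..} f"
    and frc: "\<And>t. t \<ge> 0 \<Longrightarrow> continuous (at_right t) (\<lambda>s. real (f s))"
    and fjump: "\<And>t. t > 0 \<Longrightarrow> ((\<lambda>s. real (f s)) \<longlongrightarrow> real (f t)) (at_left t) \<or>
               ((\<lambda>s. real (f s)) \<longlongrightarrow> real (f t) - 1) (at_left t)"
begin

definition tau :: "nat \<Rightarrow> real" where
  "tau k = Inf {t. 0 \<le> t \<and> k \<le> f t}"

lemma mono': "0 \<le> s \<Longrightarrow> s \<le> t \<Longrightarrow> f s \<le> f t"
  using fmono by (auto simp: mono_on_def)

lemma tau_props:
  assumes k: "1 \<le> k" and kT: "k \<le> f T" and T: "0 \<le> T"
  shows "0 < tau k" "tau k \<le> T" "f (tau k) = k"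
    "\<And>q. 0 \<le> q \<Longrightarrow> k \<le> f q \<longleftrightarrow> tau k \<le> q"
    "\<not> ((\<lambda>s. real (f s)) \<longlongrightarrow> real (f (tau k))) (at_left (tau k))"
proof -
  define S where "S = {t. 0 \<le> t \<and> k \<le> f t}"
  have TS: "T \<in> S" using kT T by (simp add: S_def)
  have bdd: "bdd_below S" unfolding S_def by (rule bdd_belowI[of _ 0]) auto
  have ne: "S \<noteq> {}" using TS by auto
  have tau_def': "tau k = Inf S" by (simp add: tau_def S_def)
  have up: "t' \<in> S" if "t \<in> S" "t \<le> t'" for t t'
    using that mono'[of t t'] by (auto simp: S_def)
  have t0: "0 \<le> tau k" unfolding tau_def' by (rule cInf_greatest[OF ne]) (auto simp: S_def)
  have tauS: "tau k \<in> S"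
  proof (rule ccontr)
    assume nS: "tau k \<notin> S"
    have "eventually (\<lambda>s. f s = f (tau k)) (at_right (tau k))"
      by (rule rc_eventually[OF frc[OF t0]])
    then obtain b where b: "b > tau k" "\<And>y. y > tau k \<Longrightarrow> y < b \<Longrightarrow> f y = f (tau k)"
      unfolding eventually_at_right_field by blast
    have "Inf S < b" using b(1) tau_def' by simp
    then obtain t where t: "t \<in> S" "t < b" using cInf_less_iff[OF ne bdd] by blast
    have "tau k \<le> t" unfolding tau_def' by (rule cInf_lower[OF t(1) bdd])
    show False
    proof (cases "t = tau k")
      case True then show ?thesis using t nS by simp
    next
      case False
      then have "f t = f (tau k)" using b(2)[of t] t \<open>tau k \<le> t\<close> by simp
      then show ?thesis using t(1) nS t0 by (simp add: S_def)
    qed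
  qed
  have iff: "k \<le> f q \<longleftrightarrow> tau k \<le> q" if "0 \<le> q" for q
  proof
    assume "k \<le> f q" then have "q \<in> S" using that by (simp add: S_def)
    then show "tau k \<le> q" unfolding tau_def' by (rule cInf_lower[OF _ bdd])
  next
    assume "tau k \<le> q" then show "k \<le> f q" using up[OF tauS] by (simp add: S_def)
  qed
  then show "\<And>q. 0 \<le> q \<Longrightarrow> k \<le> f q \<longleftrightarrow> tau k \<le> q" by blast
  show "tau k \<le> T" using iff[OF T] kT by simp
  have "tau k \<noteq> 0" using tauS k f0 by (auto simp: S_def)
  then show tpos: "0 < tau k" using t0 by simp
  have below: "eventually (\<lambda>s. real (f s) \<le> real k - 1) (at_left (tau k))"
    using eventually_at_left_real[OF tpos]
  proof eventually_elim
    case (elim s)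
    then have "f s < k" using iff[of s] by auto
    then show ?case using k by linarith
  qed
  have fk: "k \<le> f (tau k)" using tauS by (simp add: S_def)
  show nt: "\<not> ((\<lambda>s. real (f s)) \<longlongrightarrow> real (f (tau k))) (at_left (tau k))"
  proof
    assume "((\<lambda>s. real (f s)) \<longlongrightarrow> real (f (tau k))) (at_left (tau k))"
    from tendsto_upperbound[OF this below] have "real (f (tau k)) \<le> real k - 1" by simp
    then show False using fk by linarith
  qed
  then have "((\<lambda>s. real (f s)) \<longlongrightarrow> real (f (tau k)) - 1) (at_left (tau k))"
    using fjump[OF tpos] by blast
  from tendsto_upperbound[OF this below] have "real (f (tau k)) \<le> real k" by simp
  then show "f (tau k) = k" using fk by linarith
qed


definition jt :: "real set" where
  "jt = {t. 0 < t \<and> \<not> ((\<lambda>s. real (f s)) \<longlongrightarrow> real (f t)) (at_left t)}"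

lemma jump_props:
  assumes u: "u \<in> jt" and uT: "u \<le> T"
  shows "1 \<le> f u" "f u \<le> f T" "tau (f u) = u"
proof -
  have upos: "0 < u" and nt: "\<not> ((\<lambda>s. real (f s)) \<longlongrightarrow> real (f u)) (at_left u)"
    using u by (auto simp: jt_def)
  then have lim: "((\<lambda>s. real (f s)) \<longlongrightarrow> real (f u) - 1) (at_left u)"
    using fjump[OF upos] by blast
  have lt: "real (f s) \<le> real (f u) - 1" if "0 \<le> s" "s < u" for s
  proof (rule tendsto_lowerbound[OF lim])
    show "eventually (\<lambda>x. real (f s) \<le> real (f x)) (at_left u)"
      using eventually_at_left_real[OF that(2)]
      by eventually_elim (use that in \<open>auto intro!: mono'\<close>)
  qed simp
  from lt[of 0] upos f0 show f1: "1 \<le> f u" by simp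
  show "f u \<le> f T" using uT upos by (intro mono') auto
  define S where "S = {t. 0 \<le> t \<and> f u \<le> f t}"
  have uS: "u \<in> S" using upos by (simp add: S_def)
  have bdd: "bdd_below S" unfolding S_def by (rule bdd_belowI[of _ 0]) auto
  have "Inf S = u"
  proof (rule antisym)
    show "Inf S \<le> u" by (rule cInf_lower[OF uS bdd])
    show "u \<le> Inf S"
    proof (rule cInf_greatest)
      show "S \<noteq> {}" using uS by auto
      fix t assume t: "t \<in> S"
      show "u \<le> t"
      proof (rule ccontr)
        assume "\<not> u \<le> t"
        then have "real (f t) \<le> real (f u) - 1" using lt[of t] t by (simp add: S_def)
        then show False using t by (simp add: S_def)
      qed
    qed
  qed
  then show "tau (f u) = u" by (simp add: tau_def S_def)
qed

lemma bij_jumps: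
  assumes T: "0 \<le> T"
  shows "bij_betw f {u \<in> jt. 0 < u \<and> u \<le> T} {1..f T}"
proof (rule bij_betw_byWitness[where f' = tau])
  show "\<forall>a\<in>{u \<in> jt. 0 < u \<and> u \<le> T}. tau (f a) = a" using jump_props by auto
  show "\<forall>a'\<in>{1..f T}. f (tau a') = a'" using tau_props[OF _ _ T] by auto
  show "f ` {u \<in> jt. 0 < u \<and> u \<le> T} \<subseteq> {1..f T}" using jump_props by auto
  show "tau ` {1..f T} \<subseteq> {u \<in> jt. 0 < u \<and> u \<le> T}"
    using tau_props[OF _ _ T] by (auto simp: jt_def)
qed

lemma sum_jumps:
  assumes T: "0 \<le> T"
  shows "(\<Sum>u\<in>{u \<in> jt. 0 < u \<and> u \<le> T}. h u (f u)) = (\<Sum>k\<in>{1..f T}. h (tau k) k)"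
proof -
  have "(\<Sum>k\<in>{1..f T}. h (tau k) k) = (\<Sum>u\<in>{u \<in> jt. 0 < u \<and> u \<le> T}. h (tau (f u)) (f u))"
    by (rule sum.reindex_bij_betw[OF bij_jumps[OF T], symmetric])
  also have "\<dots> = (\<Sum>u\<in>{u \<in> jt. 0 < u \<and> u \<le> T}. h u (f u))"
    by (rule sum.cong) (auto simp: jump_props)
  finally show ?thesis by simp
qed

lemma dyadic_approx:
  fixes s :: "real \<Rightarrow> real"
  assumes T: "0 \<le> T" and k: "1 \<le> k" "k \<le> f T" and sc: "continuous_on {0..} s"
  shows "(\<lambda>j. \<Sum>i\<in>{1..nat \<lceil>T * 2^j\<rceil>}. (if f ((real i - 1) / 2^j) < k \<and> k \<le> f (real i / 2^j)
              then s (real i / 2^j) else 0)) \<longlonglongrightarrow> s (tau k)"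
proof -
  let ?t = "tau k"
  have tp: "0 < ?t" "?t \<le> T" and iff: "\<And>q. 0 \<le> q \<Longrightarrow> k \<le> f q \<longleftrightarrow> ?t \<le> q"
    using tau_props[OF k T] by auto
  define c where "c j = real (nat \<lceil>?t * 2^j\<rceil>) / 2^j" for j :: nat
  have eq: "(\<Sum>i\<in>{1..nat \<lceil>T * 2^j\<rceil>}. (if f ((real i - 1) / 2^j) < k \<and> k \<le> f (real i / 2^j)
              then s (real i / 2^j) else 0)) = s (c j)" for j :: nat
  proof -
    define i0 where "i0 = nat \<lceil>?t * 2^j\<rceil>"
    have p2: "(0::real) < 2^j" by simp
    have ceil_pos: "0 < \<lceil>?t * 2^j\<rceil>" using tp by simp
    have "?t * 2^j \<le> T * 2^j" using tp by simp
    then have "\<lceil>?t * 2^j\<rceil> \<le> \<lceil>T * 2^j\<rceil>" by (rule ceiling_mono)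
    then have "i0 \<le> nat \<lceil>T * 2^j\<rceil>" unfolding i0_def by (rule nat_mono)
    moreover have "1 \<le> i0"
    proof -
      have "(1::int) \<le> \<lceil>?t * 2^j\<rceil>" using ceil_pos by linarith
      then have "nat 1 \<le> i0" unfolding i0_def by (rule nat_mono)
      then show ?thesis by simp
    qed
    ultimately have i0in: "i0 \<in> {1..nat \<lceil>T * 2^j\<rceil>}" by simp
    have cond: "(f ((real i - 1) / 2^j) < k \<and> k \<le> f (real i / 2^j)) \<longleftrightarrow> i = i0"
      if i: "i \<in> {1..nat \<lceil>T * 2^j\<rceil>}" for i
    proof -
      have a: "0 \<le> (real i - 1) / 2^j" "0 \<le> real i / 2^j" using i by auto
      have "(f ((real i - 1) / 2^j) < k \<and> k \<le> f (real i / 2^j)) \<longleftrightarrow>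
            ((real i - 1) / 2^j < ?t \<and> ?t \<le> real i / 2^j)"
        using iff[OF a(1)] iff[OF a(2)] by auto
      also have "\<dots> \<longleftrightarrow> (real i - 1 < ?t * 2^j \<and> ?t * 2^j \<le> real i)"
        using p2 by (simp add: divide_less_eq le_divide_eq)
      also have "\<dots> \<longleftrightarrow> \<lceil>?t * 2^j\<rceil> = int i"
        by (simp add: ceiling_eq_iff)
      also have "\<dots> \<longleftrightarrow> i = i0" using ceil_pos unfolding i0_def by auto
      finally show ?thesis .
    qed
    have "(\<Sum>i\<in>{1..nat \<lceil>T * 2^j\<rceil>}. (if f ((real i - 1) / 2^j) < k \<and> k \<le> f (real i / 2^j)
              then s (real i / 2^j) else 0)) = (\<Sum>i\<in>{1..nat \<lceil>T * 2^j\<rceil>}. (if i = i0 then s (real i / 2^j) else 0))"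
      by (rule sum.cong) (auto simp: cond)
    also have "\<dots> = s (real i0 / 2^j)" using i0in by (simp only: sum.delta finite_atLeastAtMost if_True)
    finally show ?thesis unfolding c_def i0_def .
  qed
  have cb: "?t \<le> c j \<and> c j \<le> ?t + inverse (2^j)" for j :: nat
  proof -
    have p2: "(0::real) < 2^j" by simp
    have "of_int \<lceil>?t * 2^j\<rceil> = real (nat \<lceil>?t * 2^j\<rceil>)" using tp by simp
    moreover have "?t * 2^j \<le> of_int \<lceil>?t * 2^j\<rceil>" "of_int \<lceil>?t * 2^j\<rceil> < ?t * 2^j + 1"
      by linarith+
    ultimately have "?t * 2^j \<le> real (nat \<lceil>?t * 2^j\<rceil>)" "real (nat \<lceil>?t * 2^j\<rceil>) \<le> ?t * 2^j + 1"
      by linarith+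
    then have "?t \<le> real (nat \<lceil>?t * 2^j\<rceil>) / 2^j"
      using p2 by (simp add: pos_le_divide_eq)
    moreover have "real (nat \<lceil>?t * 2^j\<rceil>) / 2^j \<le> (?t * 2^j + 1) / 2^j"
      using p2 \<open>real (nat \<lceil>?t * 2^j\<rceil>) \<le> ?t * 2^j + 1\<close> by (simp add: divide_right_mono)
    moreover have "(?t * 2^j + 1) / 2^j = ?t + inverse (2^j)"
      using p2 by (simp add: add_divide_distrib inverse_eq_divide)
    ultimately show ?thesis unfolding c_def by simp
  qed
  have up: "(\<lambda>j. ?t + inverse ((2::real)^j)) \<longlonglongrightarrow> ?t + 0"
    by (intro tendsto_add tendsto_const LIMSEQ_inverse_realpow_zero) simp
  have lo: "\<forall>\<^sub>F j in sequentially. ?t \<le> c j"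
    by (rule always_eventually) (use cb in blast)
  have hi: "\<forall>\<^sub>F j in sequentially. c j \<le> ?t + inverse ((2::real)^j)"
    by (rule always_eventually) (use cb in blast)
  have clim: "c \<longlonglongrightarrow> ?t"
    using tendsto_sandwich[OF lo hi tendsto_const] up by simp
  have ev: "\<forall>\<^sub>F j in sequentially. c j \<in> {0..}"
  proof (rule always_eventually, rule allI)
    fix j show "c j \<in> {0..}" using cb[of j] tp by simp
  qed
  have t0: "?t \<in> {0..}" using tp by simp
  have "(\<lambda>j. s (c j)) \<longlonglongrightarrow> s ?t"
    by (rule continuous_on_tendsto_compose[OF sc clim t0 ev])
  then show ?thesis by (simp only: eq)
qed

end
lemma pred_meas:
  fixes F :: "real \<Rightarrow> 'a measure"
  assumes X: "predictable F M X" and FM: "\<And>s. 0 \<le> s \<Longrightarrow> sets (F s) \<subseteq> sets M"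
  shows "(\<lambda>x. indicator ({0..} \<times> space M) x * (case x of (t, \<omega>) \<Rightarrow> X t \<omega>)) \<in> borel_measurable (lborel \<Otimes>\<^sub>M M)"
proof -
  define \<Omega> where "\<Omega> = {0::real..} \<times> space M"
  define G where "G = {{0::real} \<times> A | A. A \<in> sets (F 0)} \<union>
        {{s<..t} \<times> A | s t A. 0 \<le> s \<and> s \<le> t \<and> A \<in> sets (F s)}"
  have FM': "A \<in> sets M" if "A \<in> sets (F s)" "0 \<le> s" for A s using FM that by blast
  have GP: "G \<subseteq> Pow \<Omega>"
    unfolding G_def \<Omega>_def using FM' sets.sets_into_space by fastforce
  have PS: "predictable_sigma F M = sigma \<Omega> G" by (simp add: predictable_sigma_def \<Omega>_def G_def)
  have sPS: "sets (predictable_sigma F M) = sigma_sets \<Omega> G" and spPS: "space (predictable_sigma F M) = \<Omega>"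
    using GP by (simp_all add: PS)
  have Gin: "G \<subseteq> sets (lborel \<Otimes>\<^sub>M M)"
    unfolding G_def using FM' by (auto intro!: pair_measureI)
  have \<Omega>in: "\<Omega> \<in> sets (lborel \<Otimes>\<^sub>M M)" unfolding \<Omega>_def by (auto intro!: pair_measureI)
  have sub: "sets (predictable_sigma F M) \<subseteq> sets (lborel \<Otimes>\<^sub>M M)"
    unfolding sPS by (rule sets.sigma_sets_subset'[OF Gin \<Omega>in])
  have "subalgebra (restrict_space (lborel \<Otimes>\<^sub>M M) \<Omega>) (predictable_sigma F M)"
    unfolding subalgebra_def
  proof
    show "space (predictable_sigma F M) = space (restrict_space (lborel \<Otimes>\<^sub>M M) \<Omega>)"
      using spPS sets.sets_into_space[OF \<Omega>in] by (auto simp: space_restrict_space)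
    show "sets (predictable_sigma F M) \<subseteq> sets (restrict_space (lborel \<Otimes>\<^sub>M M) \<Omega>)"
    proof
      fix A assume A: "A \<in> sets (predictable_sigma F M)"
      then have "A \<subseteq> \<Omega>" using sets.sets_into_space spPS by blast
      then have "A = \<Omega> \<inter> A" by blast
      then show "A \<in> sets (restrict_space (lborel \<Otimes>\<^sub>M M) \<Omega>)"
        using A sub by (auto simp: sets_restrict_space)
    qed
  qed
  then have "(\<lambda>(t, \<omega>). X t \<omega>) \<in> borel_measurable (restrict_space (lborel \<Otimes>\<^sub>M M) \<Omega>)"
    using X unfolding predictable_def by (rule measurable_from_subalg)
  then have "(\<lambda>x. indicator \<Omega> x *\<^sub>R (case x of (t, \<omega>) \<Rightarrow> X t \<omega>)) \<in> borel_measurable (lborel \<Otimes>\<^sub>M M)"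
    using \<Omega>in by (subst borel_measurable_restrict_space_iff[symmetric]) auto
  then show ?thesis by (simp add: \<Omega>_def)
qed

lemma abs_mult_le_sq: "\<bar>a * b\<bar> \<le> a\<^sup>2 + b\<^sup>2" for a b :: real
proof -
  have "0 \<le> (\<bar>a\<bar> - \<bar>b\<bar>)\<^sup>2" by simp
  then have "2 * (\<bar>a\<bar> * \<bar>b\<bar>) \<le> a\<^sup>2 + b\<^sup>2" by (simp add: power2_eq_square algebra_simps)
  moreover have "0 \<le> \<bar>a\<bar> * \<bar>b\<bar>" by simp
  ultimately show ?thesis unfolding abs_mult by linarith
qed
lemma suminf_single_ennreal: "(\<Sum>j. ennreal (x * (if n = j then 1 else 0))) = ennreal x" for n :: nat
proof -
  have "(\<lambda>j. ennreal (x * (if n = j then 1 else 0))) = (\<lambda>j. if j = n then ennreal x else 0)"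
    by (auto simp: fun_eq_iff)
  moreover have "(\<lambda>j. if j = n then ennreal x else 0) sums ennreal x"
    using sums_single[of n "\<lambda>_. ennreal x"] by simp
  ultimately show ?thesis by (simp add: sums_iff)
qed


lemma pred_nat_comp:
  assumes "h \<in> measurable M (count_space UNIV)"
  shows "Measurable.pred M (\<lambda>x. P (h x))"
  using measurable_compose[OF assms, of P "count_space UNIV"] by simp

theorem proposition2:
  fixes M :: "'a measure"
    and Z :: "nat \<Rightarrow> real \<Rightarrow> 'a \<Rightarrow> real" and m :: nat
    and N :: "real \<Rightarrow> 'a \<Rightarrow> nat"
    and lam sig B P :: "real \<Rightarrow> 'a \<Rightarrow> real"
    and T :: real
  defines "F \<equiv> factor_filtration M Z m"
  assumes prob: "prob_space M"
    and Z_meas: "\<And>i s. i < m \<Longrightarrow> Z i s \<in> borel_measurable M"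
    and T: "0 \<le> T"
    \<comment> \<open>(a) N: adapted counting process with unit jumps and intensity lam\<close>
    and N_count: "counting_process M N"
    and N_adapted: "\<And>t. 0 \<le> t \<Longrightarrow> N t \<in> measurable (F t) (count_space UNIV)"
    and N_intensity: "has_intensity M F N lam"
    and lam_pos: "\<And>\<omega> t. \<omega> \<in> space M \<Longrightarrow> 0 \<le> t \<Longrightarrow> 0 < lam t \<omega>"
    and lam_pred: "predictable F M lam"
    and lam_lc: "\<And>\<omega> t. \<omega> \<in> space M \<Longrightarrow> 0 < t \<Longrightarrow> continuous (at_left t) (\<lambda>s. lam s \<omega>)"
    and lam_rl: "\<And>\<omega> t. \<omega> \<in> space M \<Longrightarrow> 0 \<le> t \<Longrightarrow> \<exists>l. ((\<lambda>s. lam s \<omega>) \<longlongrightarrow> l) (at_right t)"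
    and lam_int: "\<And>t. 0 \<le> t \<Longrightarrow>
        AE \<omega> in M. (\<integral>\<^sup>+ s\<in>{0..t}. ennreal (lam s \<omega>) \<partial>lborel) < \<infinity>"
    \<comment> \<open>(b) B: Brownian motion with B(N(t)) adapted\<close>
    and B_bm: "brownian_motion M B"
    and BN_adapted: "\<And>t. 0 \<le> t \<Longrightarrow> (\<lambda>\<omega>. B (real (N t \<omega>)) \<omega>) \<in> borel_measurable (F t)"
    \<comment> \<open>(c) sig: positive, continuous, predictable\<close>
    and sig_pos: "\<And>\<omega> t. \<omega> \<in> space M \<Longrightarrow> 0 \<le> t \<Longrightarrow> 0 < sig t \<omega>"
    and sig_cont: "\<And>\<omega>. \<omega> \<in> space M \<Longrightarrow> continuous_on {0..} (\<lambda>t. sig t \<omega>)"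
    and sig_pred: "predictable F M sig"
    \<comment> \<open>B independent of (N, sig)\<close>
    and B_indep: "prob_space.indep_set M
        (sigma_sets (space M) {B t -` A \<inter> space M | t A. 0 \<le> t \<and> A \<in> sets borel})
        (sigma_sets (space M)
           ({N t -` A \<inter> space M | t A. 0 \<le> t} \<union>
            {sig t -` A \<inter> space M | t A. 0 \<le> t \<and> A \<in> sets borel}))"
    \<comment> \<open>moment conditions\<close>
    and mom1: "\<And>t. 0 \<le> t \<Longrightarrow> t \<le> T \<Longrightarrow>
        (\<integral>\<^sup>+ \<omega>. (\<integral>\<^sup>+ r\<in>{t..T}. ennreal ((sig r \<omega>)\<^sup>2 * lam r \<omega>) \<partial>lborel) \<partial>M) < \<infinity>"
    and mom2: "\<And>t. 0 \<le> t \<Longrightarrow> t \<le> T \<Longrightarrow> (\<integral>\<^sup>+ \<omega>. ennreal ((sig t \<omega>) ^ 4) \<partial>M) < \<infinity>"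
    and mom3: "\<And>t. 0 \<le> t \<Longrightarrow> t \<le> T \<Longrightarrow>
        (\<integral>\<^sup>+ \<omega>. (\<integral>\<^sup>+ r\<in>{0..t}. ennreal ((sig r \<omega>) ^ 4 * lam r \<omega>) \<partial>lborel) \<partial>M) < \<infinity>"
    \<comment> \<open>dP(t) = sig(t) dB(N(t)) on [0,T]\<close>
    and P_def: "\<And>\<omega> t. \<omega> \<in> space M \<Longrightarrow> 0 \<le> t \<Longrightarrow> t \<le> T \<Longrightarrow>
        P t \<omega> = P 0 \<omega> + jump_integral N B sig 0 t \<omega>"
  shows "prob_space.expectation M
           (\<lambda>\<omega>. (P T \<omega> - P 0 \<omega>)\<^sup>2 - set_lebesgue_integral lborel {0..T} (\<lambda>r. (sig r \<omega>)\<^sup>2 * lam r \<omega>))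
         = 0"
proof -
  interpret prob_space M by (rule prob)
  define Gen where "Gen = {N t -` A \<inter> space M | t A. 0 \<le> t} \<union>
            {sig t -` A \<inter> space M | t A. 0 \<le> t \<and> A \<in> sets borel}"
  define Bgen where "Bgen = {B t -` A \<inter> space M | t A. 0 \<le> t \<and> A \<in> sets borel}"
  define MG where "MG = sigma (space M) Gen"
  define MB where "MB = sigma (space M) Bgen"
  have GenP: "Gen \<subseteq> Pow (space M)" and BgenP: "Bgen \<subseteq> Pow (space M)"
    unfolding Gen_def Bgen_def by auto
  have spMG: "space MG = space M" and setsMG: "sets MG = sigma_sets (space M) Gen"
    using GenP by (simp_all add: MG_def)
  have spMB: "space MB = space M" and setsMB: "sets MB = sigma_sets (space M) Bgen"
    using BgenP by (simp_all add: MB_def)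
  have indB: "indep_set (sigma_sets (space M) Bgen) (sigma_sets (space M) Gen)"
    using B_indep by (simp add: Gen_def Bgen_def)
  have evB: "sigma_sets (space M) Bgen \<subseteq> events" and evG: "sigma_sets (space M) Gen \<subseteq> events"
    using indep_setD_ev1[OF indB] indep_setD_ev2[OF indB] by auto
  have subG: "subalgebra M MG" and subB: "subalgebra M MB"
    unfolding subalgebra_def using spMG setsMG spMB setsMB evB evG by auto
  have NG: "N t \<in> measurable MG (count_space UNIV)" if "0 \<le> t" for t
  proof (rule measurableI)
    fix A assume "A \<in> sets (count_space (UNIV :: nat set))"
    have "N t -` A \<inter> space M \<in> Gen" unfolding Gen_def using that by blast
    then show "N t -` A \<inter> space MG \<in> sets MG" unfolding spMG setsMG by blast
  qed simp
  have sigG: "sig t \<in> borel_measurable MG" if "0 \<le> t" for t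
  proof (rule measurableI)
    fix A assume "A \<in> sets (borel :: real measure)"
    then have "sig t -` A \<inter> space M \<in> Gen" unfolding Gen_def using that by blast
    then show "sig t -` A \<inter> space MG \<in> sets MG" unfolding spMG setsMG by blast
  qed simp
  have BB: "B t \<in> borel_measurable MB" if "0 \<le> t" for t
  proof (rule measurableI)
    fix A assume "A \<in> sets (borel :: real measure)"
    then have "B t -` A \<inter> space M \<in> Bgen" unfolding Bgen_def using that by blast
    then show "B t -` A \<inter> space MB \<in> sets MB" unfolding spMB setsMB by blast
  qed simp
  have indep: "integrable M (\<lambda>\<omega>. X \<omega> * Y \<omega>) \<and> expectation (\<lambda>\<omega>. X \<omega> * Y \<omega>) = expectation X * expectation Y"
    if X: "X \<in> borel_measurable MG" and Y: "Y \<in> borel_measurable MB"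
      and iX: "integrable M X" and iY: "integrable M Y" for X Y :: "'a \<Rightarrow> real"
  proof -
    have XM: "random_variable borel X" by (rule measurable_from_subalg[OF subG X])
    have YM: "random_variable borel Y" by (rule measurable_from_subalg[OF subB Y])
    have sY: "sigma_sets (space M) {Y -` A \<inter> space M | A. A \<in> sets borel} \<subseteq> sigma_sets (space M) Bgen"
      by (rule sigma_sets_mono) (use Y spMB setsMB in \<open>auto simp: measurable_def\<close>)
    have sX: "sigma_sets (space M) {X -` A \<inter> space M | A. A \<in> sets borel} \<subseteq> sigma_sets (space M) Gen"
      by (rule sigma_sets_mono) (use X spMG setsMG in \<open>auto simp: measurable_def\<close>)
    have "indep_var borel Y borel X"
      unfolding indep_var_eq
    proof (intro conjI YM XM)
      show "indep_set (sigma_sets (space M) {Y -` A \<inter> space M | A. A \<in> sets borel})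
                      (sigma_sets (space M) {X -` A \<inter> space M | A. A \<in> sets borel})"
        unfolding indep_sets2_eq
        using sX sY evB evG indep_setD[OF indB] by blast
    qed
    then show ?thesis
      using indep_var_lebesgue_integral[of Y X] indep_var_integrable[of Y X] iX iY
      by (simp add: mult.commute)
  qed
  have Nmeas: "N t \<in> measurable M (count_space UNIV)" for t
    using N_count unfolding counting_process_def by blast
  have cp: "cpath (\<lambda>t. N t \<omega>)" if "\<omega> \<in> space M" for \<omega>
    using N_count that unfolding counting_process_def by (intro cpath.intro) auto
  have jt_eq: "cpath.jt (\<lambda>t. N t \<omega>) = jump_times N \<omega>" if "\<omega> \<in> space M" for \<omega>
    by (simp add: cpath.jt_def[OF cp[OF that]] jump_times_def)
  define tau where "tau k \<omega> = cpath.tau (\<lambda>t. N t \<omega>) k" for k \<omega>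
  define g where "g k \<omega> = (if 1 \<le> k \<and> k \<le> N T \<omega> then sig (tau k \<omega>) \<omega> else 0)" for k \<omega>
  define U where "U k \<omega> = B (real k) \<omega> - B (real k - 1) \<omega>" for k \<omega>
  define A where "A \<omega> = jump_integral N B sig 0 T \<omega>" for \<omega>
  define S where "S \<omega> = (\<Sum>s\<in>{s\<in>jump_times N \<omega>. s \<le> T}. (sig s \<omega>)\<^sup>2)" for \<omega>
  have A_eq: "A \<omega> = (\<Sum>k\<in>{1..N T \<omega>}. g k \<omega> * U k \<omega>)" if \<omega>: "\<omega> \<in> space M" for \<omega>
  proof -
    have "A \<omega> = (\<Sum>u\<in>{u \<in> cpath.jt (\<lambda>t. N t \<omega>). 0 < u \<and> u \<le> T}.
             (\<lambda>u m. sig u \<omega> * (B (real m) \<omega> - B (real m - 1) \<omega>)) u (N u \<omega>))"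
      by (simp add: A_def jump_integral_def jt_eq[OF \<omega>])
    also have "\<dots> = (\<Sum>k\<in>{1..N T \<omega>}. sig (tau k \<omega>) \<omega> * U k \<omega>)"
      using cpath.sum_jumps[OF cp[OF \<omega>] T, where h = "\<lambda>u m. sig u \<omega> * (B (real m) \<omega> - B (real m - 1) \<omega>)"]
      by (simp add: tau_def U_def)
    also have "\<dots> = (\<Sum>k\<in>{1..N T \<omega>}. g k \<omega> * U k \<omega>)"
      by (rule sum.cong) (auto simp: g_def)
    finally show ?thesis .
  qed
  have S_eq: "S \<omega> = (\<Sum>k\<in>{1..N T \<omega>}. (g k \<omega>)\<^sup>2)" if \<omega>: "\<omega> \<in> space M" for \<omega>
  proof -
    have "{s\<in>jump_times N \<omega>. s \<le> T} = {u \<in> cpath.jt (\<lambda>t. N t \<omega>). 0 < u \<and> u \<le> T}"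
      by (auto simp: jt_eq[OF \<omega>] jump_times_def)
    then have "S \<omega> = (\<Sum>u\<in>{u \<in> cpath.jt (\<lambda>t. N t \<omega>). 0 < u \<and> u \<le> T}.
             (\<lambda>u m. (sig u \<omega>)\<^sup>2) u (N u \<omega>))"
      by (simp add: S_def)
    also have "\<dots> = (\<Sum>k\<in>{1..N T \<omega>}. (sig (tau k \<omega>) \<omega>)\<^sup>2)"
      using cpath.sum_jumps[OF cp[OF \<omega>] T, where h = "\<lambda>u m. (sig u \<omega>)\<^sup>2"]
      by (simp add: tau_def)
    also have "\<dots> = (\<Sum>k\<in>{1..N T \<omega>}. (g k \<omega>)\<^sup>2)"
      by (rule sum.cong) (auto simp: g_def)
    finally show ?thesis .
  qed
  have g_zero: "g k \<omega> = 0" if "k \<notin> {1..N T \<omega>}" for k \<omega>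
    using that by (auto simp: g_def)
  have gG: "g k \<in> borel_measurable MG" for k
  proof -
    define h where "h j \<omega> = (if 1 \<le> k \<and> k \<le> N T \<omega> then
        (\<Sum>i\<in>{1..nat \<lceil>T * 2^j\<rceil>}. (if N ((real i - 1) / 2^j) \<omega> < k \<and> k \<le> N (real i / 2^j) \<omega>
              then sig (real i / 2^j) \<omega> else 0)) else 0)" for j :: nat and \<omega>
    show ?thesis
    proof (rule borel_measurable_LIMSEQ_real[where u = h])
      fix \<omega> assume \<omega>: "\<omega> \<in> space MG"
      show "(\<lambda>j. h j \<omega>) \<longlonglongrightarrow> g k \<omega>"
      proof (cases "1 \<le> k \<and> k \<le> N T \<omega>")
        case True
        have \<omega>M: "\<omega> \<in> space M" using \<omega> spMG by simp
        have sc: "continuous_on {0..} (\<lambda>t. sig t \<omega>)" using sig_cont \<omega>M by simp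
        have "(\<lambda>j. h j \<omega>) = (\<lambda>j. \<Sum>i\<in>{1..nat \<lceil>T * 2^j\<rceil>}. (if N ((real i - 1) / 2^j) \<omega> < k \<and> k \<le> N (real i / 2^j) \<omega>
              then sig (real i / 2^j) \<omega> else 0))"
          using True by (simp add: h_def)
        moreover have "g k \<omega> = sig (cpath.tau (\<lambda>t. N t \<omega>) k) \<omega>"
          using True by (simp add: g_def tau_def)
        ultimately show ?thesis
          using cpath.dyadic_approx[OF cp[OF \<omega>M] T, where k=k and s="\<lambda>t. sig t \<omega>"] True sc
          by simp
      next
        case False
        have "h j \<omega> = 0" for j unfolding h_def by (rule if_not_P[OF False])
        moreover have "g k \<omega> = 0" unfolding g_def by (rule if_not_P[OF False])
        ultimately show ?thesis by simp
      qed
    next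
      fix j
      have c1: "Measurable.pred MG (\<lambda>\<omega>. 1 \<le> k \<and> k \<le> N T \<omega>)"
        by (rule pred_nat_comp[OF NG[OF T], where P = "\<lambda>n. 1 \<le> k \<and> k \<le> n"])
      have trm: "(\<lambda>\<omega>. if N ((real i - 1) / 2^j) \<omega> < k \<and> k \<le> N (real i / 2^j) \<omega>
              then sig (real i / 2^j) \<omega> else 0) \<in> borel_measurable MG"
        if i: "i \<in> {1..nat \<lceil>T * 2^j\<rceil>}" for i
      proof -
        have a: "0 \<le> (real i - 1) / 2^j" "0 \<le> real i / 2^j" using i by auto
        have p: "Measurable.pred MG (\<lambda>\<omega>. N ((real i - 1) / 2^j) \<omega> < k \<and> k \<le> N (real i / 2^j) \<omega>)"
          by (rule pred_intros_logic(3)[OF pred_nat_comp[OF NG[OF a(1)], where P = "\<lambda>n. n < k"]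
                  pred_nat_comp[OF NG[OF a(2)], where P = "\<lambda>n. k \<le> n"]])
        show ?thesis
          by (rule measurable_If[OF sigG[OF a(2)] _ predE[OF p]]) simp
      qed
      show "h j \<in> borel_measurable MG"
        unfolding h_def
        by (rule measurable_If[OF borel_measurable_sum[OF trm] _ predE[OF c1]]) simp_all
    qed
  qed
  have UB: "U k \<in> borel_measurable MB" if "1 \<le> k" for k
    unfolding U_def using BB[of "real k"] BB[of "real k - 1"] that
    by (intro borel_measurable_diff) auto
  have wG: "(\<lambda>\<omega>. if N T \<omega> = j then 1 else 0 :: real) \<in> borel_measurable MG" for j
    by (rule measurable_If[OF _ _ predE[OF pred_nat_comp[OF NG[OF T]]]]) simp_all
  have gM: "g k \<in> borel_measurable M" for k by (rule measurable_from_subalg[OF subG gG])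
  have UM: "U k \<in> borel_measurable M" if "1 \<le> k" for k by (rule measurable_from_subalg[OF subB UB[OF that]])
  have wM: "(\<lambda>\<omega>. if N T \<omega> = j then 1 else 0 :: real) \<in> borel_measurable M" for j
    by (rule measurable_from_subalg[OF subG wG])
  have AM: "A \<in> borel_measurable M"
  proof (rule borel_measurable_LIMSEQ_real[where u = "\<lambda>K \<omega>. \<Sum>k\<in>{1..K}. g k \<omega> * U k \<omega>"])
    fix \<omega> assume \<omega>: "\<omega> \<in> space M"
    have "\<forall>K\<ge>N T \<omega>. (\<Sum>k\<in>{1..K}. g k \<omega> * U k \<omega>) = A \<omega>"
    proof (intro allI impI)
      fix K assume K: "N T \<omega> \<le> K"
      have "(\<Sum>k\<in>{1..K}. g k \<omega> * U k \<omega>) = (\<Sum>k\<in>{1..N T \<omega>}. g k \<omega> * U k \<omega>)"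
        by (rule sum.mono_neutral_right) (use K g_zero in auto)
      then show "(\<Sum>k\<in>{1..K}. g k \<omega> * U k \<omega>) = A \<omega>" using A_eq[OF \<omega>] by simp
    qed
    then show "(\<lambda>K. \<Sum>k\<in>{1..K}. g k \<omega> * U k \<omega>) \<longlonglongrightarrow> A \<omega>"
      by (intro tendsto_eventually) (auto simp: eventually_sequentially)
  next
    fix K show "(\<lambda>\<omega>. \<Sum>k\<in>{1..K}. g k \<omega> * U k \<omega>) \<in> borel_measurable M"
      using gM UM by (intro borel_measurable_sum borel_measurable_times) auto
  qed
  have SM: "S \<in> borel_measurable M"
  proof (rule borel_measurable_LIMSEQ_real[where u = "\<lambda>K \<omega>. \<Sum>k\<in>{1..K}. (g k \<omega>)\<^sup>2"])
    fix \<omega> assume \<omega>: "\<omega> \<in> space M"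
    have "\<forall>K\<ge>N T \<omega>. (\<Sum>k\<in>{1..K}. (g k \<omega>)\<^sup>2) = S \<omega>"
    proof (intro allI impI)
      fix K assume K: "N T \<omega> \<le> K"
      have "(\<Sum>k\<in>{1..K}. (g k \<omega>)\<^sup>2) = (\<Sum>k\<in>{1..N T \<omega>}. (g k \<omega>)\<^sup>2)"
        by (rule sum.mono_neutral_right) (use K g_zero in auto)
      then show "(\<Sum>k\<in>{1..K}. (g k \<omega>)\<^sup>2) = S \<omega>" using S_eq[OF \<omega>] by simp
    qed
    then show "(\<lambda>K. \<Sum>k\<in>{1..K}. (g k \<omega>)\<^sup>2) \<longlonglongrightarrow> S \<omega>"
      by (intro tendsto_eventually) (auto simp: eventually_sequentially)
  next
    fix K show "(\<lambda>\<omega>. \<Sum>k\<in>{1..K}. (g k \<omega>)\<^sup>2) \<in> borel_measurable M"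
      using gM by (intro borel_measurable_sum borel_measurable_power) auto
  qed
  have Bdist: "\<And>s t. 0 \<le> s \<Longrightarrow> s < t \<Longrightarrow>
        distributed M lborel (\<lambda>\<omega>. B t \<omega> - B s \<omega>) (normal_density 0 (sqrt (t - s)))"
    and Bind: "\<And>(ts :: nat \<Rightarrow> real) n. (\<forall>i\<le>n. 0 \<le> ts i) \<Longrightarrow> (\<forall>i<n. ts i < ts (Suc i)) \<Longrightarrow>
        indep_vars (\<lambda>_. borel) (\<lambda>i \<omega>. B (ts (Suc i)) \<omega> - B (ts i) \<omega>) {..<n}"
    using B_bm unfolding brownian_motion_def by auto
  have Ud: "distributed M lborel (U k) (normal_density 0 1)" if "1 \<le> k" for k
  proof -
    have "U k = (\<lambda>\<omega>. B (real k) \<omega> - B (real k - 1) \<omega>)" by (simp add: U_def fun_eq_iff)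
    then show ?thesis using Bdist[of "real k - 1" "real k"] that by simp
  qed
  have U2int: "integrable M (\<lambda>\<omega>. (U k \<omega>)\<^sup>2)" if "1 \<le> k" for k
    using distributed_integrable[OF Ud[OF that], of "\<lambda>x. x\<^sup>2"] integrable_std_normal_moment[of 2] by simp
  have UE: "expectation (U k) = 0" if "1 \<le> k" for k
    using normal_distributed_expectation[OF _ Ud[OF that]] by simp
  have U2E: "expectation (\<lambda>\<omega>. (U k \<omega>)\<^sup>2) = 1" if "1 \<le> k" for k
    using normal_distributed_variance[OF _ Ud[OF that]] UE[OF that] by simp
  have Uint: "integrable M (U k)" if "1 \<le> k" for k
    by (rule distributed_integrable_var[OF Ud[OF that]]) (auto intro: integrable_normal_moment_nz_1)
  have Uind: "indep_vars (\<lambda>_. borel) (\<lambda>i. U (Suc i)) {..<n}" for n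
  proof -
    have "(\<lambda>i \<omega>. B (real (Suc i)) \<omega> - B (real i) \<omega>) = (\<lambda>i. U (Suc i))"
      by (simp add: U_def fun_eq_iff)
    then show ?thesis using Bind[of n "\<lambda>i. real i"] by simp
  qed
  have UUint: "integrable M (\<lambda>\<omega>. U k \<omega> * U l \<omega>)" if "1 \<le> k" "1 \<le> l" for k l
  proof (rule Bochner_Integration.integrable_bound[OF Bochner_Integration.integrable_add[OF U2int[OF that(1)] U2int[OF that(2)]]])
    show "(\<lambda>\<omega>. U k \<omega> * U l \<omega>) \<in> borel_measurable M" using UM that by simp
    show "AE x in M. norm (U k x * U l x) \<le> norm ((U k x)\<^sup>2 + (U l x)\<^sup>2)"
      using abs_mult_le_sq by simp
  qed
  have UUE: "expectation (\<lambda>\<omega>. U k \<omega> * U l \<omega>) = (if k = l then 1 else 0)" if "1 \<le> k" "1 \<le> l" for k l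
  proof (cases "k = l")
    case True then show ?thesis using U2E[OF that(1)] by (simp add: power2_eq_square)
  next
    case False
    define I where "I = {k - 1, l - 1}"
    have I: "I \<subseteq> {..<max k l}" using that by (auto simp: I_def)
    have ind: "indep_vars (\<lambda>_. borel) (\<lambda>i. U (Suc i)) I" by (rule indep_vars_subset[OF Uind I])
    have "(\<integral>\<omega>. (\<Prod>i\<in>I. U (Suc i) \<omega>) \<partial>M) = (\<Prod>i\<in>I. \<integral>\<omega>. U (Suc i) \<omega> \<partial>M)"
      by (rule indep_vars_lebesgue_integral[OF _ ind]) (auto simp: I_def intro!: Uint)
    moreover have "(\<Prod>i\<in>I. U (Suc i) \<omega>) = U k \<omega> * U l \<omega>" for \<omega>
      using that False by (simp add: I_def)
    moreover have "(\<Prod>i\<in>I. \<integral>\<omega>. U (Suc i) \<omega> \<partial>M) = 0"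
      using that False by (simp add: I_def UE)
    ultimately show ?thesis using False by simp
  qed
  have C_pred: "predictable F M (\<lambda>s \<omega>. (sig s \<omega>)\<^sup>2)"
  proof -
    have "(\<lambda>x. (case x of (t, \<omega>) \<Rightarrow> sig t \<omega>)\<^sup>2) \<in> borel_measurable (predictable_sigma F M)"
      by (rule borel_measurable_power[OF sig_pred[unfolded predictable_def]])
    moreover have "(\<lambda>(t, \<omega>). (sig t \<omega>)\<^sup>2) = (\<lambda>x. (case x of (t, \<omega>) \<Rightarrow> sig t \<omega>)\<^sup>2)"
      by (auto simp: fun_eq_iff)
    ultimately show ?thesis unfolding predictable_def by simp
  qed
  have nnS: "(\<integral>\<^sup>+ \<omega>. ennreal (S \<omega>) \<partial>M) =
      (\<integral>\<^sup>+ \<omega>. (\<integral>\<^sup>+ s\<in>{0<..T}. ennreal ((sig s \<omega>)\<^sup>2 * lam s \<omega>) \<partial>lborel) \<partial>M)"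
    using N_intensity C_pred T unfolding has_intensity_def S_def by auto
  have nnS_le: "(\<integral>\<^sup>+ \<omega>. (\<integral>\<^sup>+ s\<in>{0<..T}. ennreal ((sig s \<omega>)\<^sup>2 * lam s \<omega>) \<partial>lborel) \<partial>M) \<le>
      (\<integral>\<^sup>+ \<omega>. (\<integral>\<^sup>+ s\<in>{0..T}. ennreal ((sig s \<omega>)\<^sup>2 * lam s \<omega>) \<partial>lborel) \<partial>M)"
    by (intro nn_integral_mono) (auto split: split_indicator)
  have Sfin: "(\<integral>\<^sup>+ \<omega>. ennreal (S \<omega>) \<partial>M) < \<infinity>"
    using nnS nnS_le mom1[of 0] T by simp
  have S_nonneg: "0 \<le> S \<omega>" for \<omega> unfolding S_def by (simp add: sum_nonneg)
  have Sint: "integrable M S"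
    by (rule integrableI_nonneg[OF SM]) (use S_nonneg Sfin in auto)
  have g2S: "(g k \<omega>)\<^sup>2 \<le> S \<omega>" if \<omega>: "\<omega> \<in> space M" for k \<omega>
  proof (cases "k \<in> {1..N T \<omega>}")
    case True
    then show ?thesis unfolding S_eq[OF \<omega>]
      by (intro member_le_sum) auto
  next
    case False then show ?thesis using g_zero S_nonneg by simp
  qed
  define w where "w j \<omega> = (if N T \<omega> = j then 1 else 0 :: real)" for j \<omega>
  have XGint: "integrable M (\<lambda>\<omega>. g k \<omega> * g l \<omega> * w j \<omega>)" for k l j
  proof (rule Bochner_Integration.integrable_bound[of _ "\<lambda>\<omega>. 2 * S \<omega>"])
    show "integrable M (\<lambda>\<omega>. 2 * S \<omega>)" using Sint by simp
    show "(\<lambda>\<omega>. g k \<omega> * g l \<omega> * w j \<omega>) \<in> borel_measurable M"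
      using gM wM unfolding w_def by simp
    show "AE \<omega> in M. norm (g k \<omega> * g l \<omega> * w j \<omega>) \<le> norm (2 * S \<omega>)"
    proof (rule AE_I2)
      fix \<omega> assume \<omega>: "\<omega> \<in> space M"
      have "\<bar>g k \<omega> * g l \<omega> * w j \<omega>\<bar> \<le> \<bar>g k \<omega> * g l \<omega>\<bar>" by (simp add: w_def abs_mult)
      also have "\<dots> \<le> (g k \<omega>)\<^sup>2 + (g l \<omega>)\<^sup>2" by (rule abs_mult_le_sq)
      also have "\<dots> \<le> 2 * S \<omega>" using g2S[OF \<omega>, of k] g2S[OF \<omega>, of l] by simp
      finally show "norm (g k \<omega> * g l \<omega> * w j \<omega>) \<le> norm (2 * S \<omega>)" using S_nonneg[of \<omega>] by simp
    qed
  qed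
  have prodE: "integrable M (\<lambda>\<omega>. (g k \<omega> * g l \<omega> * w j \<omega>) * (U k \<omega> * U l \<omega>)) \<and>
      expectation (\<lambda>\<omega>. (g k \<omega> * g l \<omega> * w j \<omega>) * (U k \<omega> * U l \<omega>)) =
      (if k = l then expectation (\<lambda>\<omega>. g k \<omega> * g l \<omega> * w j \<omega>) else 0)"
    if "1 \<le> k" "1 \<le> l" for k l j
  proof -
    have XG: "(\<lambda>\<omega>. g k \<omega> * g l \<omega> * w j \<omega>) \<in> borel_measurable MG"
      using gG wG unfolding w_def by simp
    have YB: "(\<lambda>\<omega>. U k \<omega> * U l \<omega>) \<in> borel_measurable MB"
      using UB that by simp
    show ?thesis using indep[OF XG YB XGint UUint[OF that]] UUE[OF that] by simp
  qed
  have Aj_eq: "(A \<omega>)\<^sup>2 * w j \<omega> = (\<Sum>k\<in>{1..j}. \<Sum>l\<in>{1..j}. (g k \<omega> * g l \<omega> * w j \<omega>) * (U k \<omega> * U l \<omega>))"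
    if \<omega>: "\<omega> \<in> space M" for \<omega> j
  proof (cases "N T \<omega> = j")
    case True
    have "(A \<omega>)\<^sup>2 = (\<Sum>k\<in>{1..j}. \<Sum>l\<in>{1..j}. (g k \<omega> * U k \<omega>) * (g l \<omega> * U l \<omega>))"
      using A_eq[OF \<omega>] True by (simp add: power2_eq_square sum_product)
    then show ?thesis by (simp add: w_def True mult_ac)
  next
    case False then show ?thesis by (simp add: w_def)
  qed
  have Sj_eq: "S \<omega> * w j \<omega> = (\<Sum>k\<in>{1..j}. g k \<omega> * g k \<omega> * w j \<omega>)"
    if \<omega>: "\<omega> \<in> space M" for \<omega> j
  proof (cases "N T \<omega> = j")
    case True
    then show ?thesis using S_eq[OF \<omega>] by (simp add: w_def power2_eq_square)
  next
    case False then show ?thesis by (simp add: w_def)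
  qed
  have AjE: "integrable M (\<lambda>\<omega>. (A \<omega>)\<^sup>2 * w j \<omega>) \<and>
      expectation (\<lambda>\<omega>. (A \<omega>)\<^sup>2 * w j \<omega>) = expectation (\<lambda>\<omega>. S \<omega> * w j \<omega>)" for j
  proof -
    define Fj where "Fj \<omega> = (\<Sum>k\<in>{1..j}. \<Sum>l\<in>{1..j}. (g k \<omega> * g l \<omega> * w j \<omega>) * (U k \<omega> * U l \<omega>))" for \<omega>
    have intkl: "integrable M (\<lambda>\<omega>. (g k \<omega> * g l \<omega> * w j \<omega>) * (U k \<omega> * U l \<omega>))"
      if "k \<in> {1..j}" "l \<in> {1..j}" for k l
      using prodE[of k l j] that by simp
    have intF: "integrable M Fj" unfolding Fj_def
      by (intro Bochner_Integration.integrable_sum intkl)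
    have eqF: "integrable M (\<lambda>\<omega>. (A \<omega>)\<^sup>2 * w j \<omega>) = integrable M Fj"
      by (rule Bochner_Integration.integrable_cong) (auto simp: Fj_def Aj_eq)
    have "expectation (\<lambda>\<omega>. (A \<omega>)\<^sup>2 * w j \<omega>) = expectation Fj"
      by (rule Bochner_Integration.integral_cong) (auto simp: Fj_def Aj_eq)
    also have "\<dots> = (\<Sum>k\<in>{1..j}. expectation (\<lambda>\<omega>. \<Sum>l\<in>{1..j}. (g k \<omega> * g l \<omega> * w j \<omega>) * (U k \<omega> * U l \<omega>)))"
      unfolding Fj_def
      by (rule Bochner_Integration.integral_sum) (intro Bochner_Integration.integrable_sum intkl; simp)
    also have "\<dots> = (\<Sum>k\<in>{1..j}. \<Sum>l\<in>{1..j}. expectation (\<lambda>\<omega>. (g k \<omega> * g l \<omega> * w j \<omega>) * (U k \<omega> * U l \<omega>)))"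
      by (intro sum.cong refl Bochner_Integration.integral_sum intkl) auto
    also have "\<dots> = (\<Sum>k\<in>{1..j}. \<Sum>l\<in>{1..j}. (if k = l then expectation (\<lambda>\<omega>. g k \<omega> * g l \<omega> * w j \<omega>) else 0))"
      by (intro sum.cong refl) (use prodE in auto)
    also have "\<dots> = (\<Sum>k\<in>{1..j}. expectation (\<lambda>\<omega>. g k \<omega> * g k \<omega> * w j \<omega>))"
      by (intro sum.cong refl) (simp add: sum.delta)
    also have "\<dots> = expectation (\<lambda>\<omega>. \<Sum>k\<in>{1..j}. g k \<omega> * g k \<omega> * w j \<omega>)"
      by (rule Bochner_Integration.integral_sum[symmetric]) (rule XGint)
    also have "\<dots> = expectation (\<lambda>\<omega>. S \<omega> * w j \<omega>)"
      by (rule Bochner_Integration.integral_cong) (auto simp: Sj_eq)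
    finally show ?thesis using intF eqF by simp
  qed
  have Swint: "integrable M (\<lambda>\<omega>. S \<omega> * w j \<omega>)" for j
  proof (rule Bochner_Integration.integrable_bound[OF Sint])
    show "(\<lambda>\<omega>. S \<omega> * w j \<omega>) \<in> borel_measurable M" using SM wM unfolding w_def by simp
    show "AE x in M. norm (S x * w j x) \<le> norm (S x)" by (auto simp: w_def)
  qed
  have ptA: "(\<Sum>j. ennreal ((A \<omega>)\<^sup>2 * w j \<omega>)) = ennreal ((A \<omega>)\<^sup>2)" for \<omega>
    unfolding w_def by (rule suminf_single_ennreal)
  have ptS: "(\<Sum>j. ennreal (S \<omega> * w j \<omega>)) = ennreal (S \<omega>)" for \<omega>
    unfolding w_def by (rule suminf_single_ennreal)
  have AwM: "(\<lambda>\<omega>. (A \<omega>)\<^sup>2 * w j \<omega>) \<in> borel_measurable M" for j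
    using AM wM unfolding w_def by simp
  have SwM: "(\<lambda>\<omega>. S \<omega> * w j \<omega>) \<in> borel_measurable M" for j
    using SM wM unfolding w_def by simp
  have w_nonneg: "0 \<le> w j \<omega>" for j \<omega> by (simp add: w_def)
  have AA: "(\<integral>\<^sup>+ \<omega>. ennreal ((A \<omega>)\<^sup>2) \<partial>M) = (\<integral>\<^sup>+ \<omega>. ennreal (S \<omega>) \<partial>M)"
  proof -
    have "(\<integral>\<^sup>+ \<omega>. ennreal ((A \<omega>)\<^sup>2) \<partial>M) = (\<integral>\<^sup>+ \<omega>. (\<Sum>j. ennreal ((A \<omega>)\<^sup>2 * w j \<omega>)) \<partial>M)"
      by (simp add: ptA)
    also have "\<dots> = (\<Sum>j. \<integral>\<^sup>+ \<omega>. ennreal ((A \<omega>)\<^sup>2 * w j \<omega>) \<partial>M)"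
      by (rule nn_integral_suminf) (use AwM in simp)
    also have "\<dots> = (\<Sum>j. ennreal (expectation (\<lambda>\<omega>. (A \<omega>)\<^sup>2 * w j \<omega>)))"
      using AjE w_nonneg by (intro suminf_cong nn_integral_eq_integral) auto
    also have "\<dots> = (\<Sum>j. ennreal (expectation (\<lambda>\<omega>. S \<omega> * w j \<omega>)))"
      using AjE by simp
    also have "\<dots> = (\<Sum>j. \<integral>\<^sup>+ \<omega>. ennreal (S \<omega> * w j \<omega>) \<partial>M)"
      using Swint w_nonneg S_nonneg by (intro suminf_cong nn_integral_eq_integral[symmetric]) auto
    also have "\<dots> = (\<integral>\<^sup>+ \<omega>. (\<Sum>j. ennreal (S \<omega> * w j \<omega>)) \<partial>M)"
      by (rule nn_integral_suminf[symmetric]) (use SwM in simp)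
    also have "\<dots> = (\<integral>\<^sup>+ \<omega>. ennreal (S \<omega>) \<partial>M)"
      by (simp add: ptS)
    finally show ?thesis .
  qed
  have A2M: "(\<lambda>\<omega>. (A \<omega>)\<^sup>2) \<in> borel_measurable M" using AM by simp
  have A2int: "integrable M (\<lambda>\<omega>. (A \<omega>)\<^sup>2)"
    by (rule integrableI_nonneg[OF A2M]) (use AA Sfin in auto)
  have EA2: "expectation (\<lambda>\<omega>. (A \<omega>)\<^sup>2) = enn2real (\<integral>\<^sup>+ \<omega>. ennreal (S \<omega>) \<partial>M)"
    using integral_eq_nn_integral[OF A2M] AA by simp
  have FM: "sets (F s) \<subseteq> sets M" for s
  proof -
    define Zg where "Zg = {Z i r -` A \<inter> space M | i r A. i < m \<and> 0 \<le> r \<and> r \<le> s \<and> A \<in> sets borel}"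
    have ZgP: "Zg \<subseteq> Pow (space M)" unfolding Zg_def by auto
    have "Zg \<subseteq> sets M" unfolding Zg_def using Z_meas by (auto intro: measurable_sets)
    moreover have "sets (F s) = sigma_sets (space M) Zg"
      using ZgP by (simp add: F_def factor_filtration_def Zg_def)
    ultimately show ?thesis by (simp add: sets.sigma_sets_subset)
  qed
  have H_pred: "predictable F M (\<lambda>t \<omega>. (sig t \<omega>)\<^sup>2 * lam t \<omega>)"
  proof -
    have "(\<lambda>x. (case x of (t, \<omega>) \<Rightarrow> sig t \<omega>)\<^sup>2 * (case x of (t, \<omega>) \<Rightarrow> lam t \<omega>)) \<in> borel_measurable (predictable_sigma F M)"
      by (rule borel_measurable_times[OF borel_measurable_power[OF sig_pred[unfolded predictable_def]]
            lam_pred[unfolded predictable_def]])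
    moreover have "(\<lambda>(t, \<omega>). (sig t \<omega>)\<^sup>2 * lam t \<omega>) = (\<lambda>x. (case x of (t, \<omega>) \<Rightarrow> sig t \<omega>)\<^sup>2 * (case x of (t, \<omega>) \<Rightarrow> lam t \<omega>))"
      by (auto simp: fun_eq_iff)
    ultimately show ?thesis unfolding predictable_def by simp
  qed
  define H where "H x = indicator ({0..} \<times> space M) x * (case x of (t, \<omega>) \<Rightarrow> (sig t \<omega>)\<^sup>2 * lam t \<omega>)" for x :: "real \<times> 'a"
  have HM: "H \<in> borel_measurable (lborel \<Otimes>\<^sub>M M)"
    unfolding H_def by (rule pred_meas[OF H_pred FM])
  define K where "K x = indicator {0..T} (snd x) * ((sig (snd x) (fst x))\<^sup>2 * lam (snd x) (fst x))" for x :: "'a \<times> real"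
  have KM: "K \<in> borel_measurable (M \<Otimes>\<^sub>M lborel)"
  proof -
    have sw: "(\<lambda>(x, y). H (y, x)) \<in> borel_measurable (M \<Otimes>\<^sub>M lborel)"
      using HM measurable_pair_swap_iff by blast
    have "{0..T} \<in> sets (lborel :: real measure)" by simp
    then have ind0: "(indicator {0..T} :: real \<Rightarrow> real) \<in> borel_measurable lborel"
      by (rule borel_measurable_indicator)
    have ind: "(\<lambda>x. (indicator {0..T} :: real \<Rightarrow> real) (snd x)) \<in> borel_measurable (M \<Otimes>\<^sub>M lborel)"
      using measurable_compose[OF measurable_snd ind0] by simp
    have prod: "(\<lambda>x. indicator {0..T} (snd x) * (case x of (x, y) \<Rightarrow> H (y, x))) \<in> borel_measurable (M \<Otimes>\<^sub>M lborel)"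
      by (rule borel_measurable_times[OF ind sw])
    have eq: "indicator {0..T} (snd x) * (case x of (x, y) \<Rightarrow> H (y, x)) = K x"
      if "x \<in> space (M \<Otimes>\<^sub>M lborel)" for x
      using that by (auto simp: H_def K_def space_pair_measure split: split_indicator)
    have "(\<lambda>x. indicator {0..T} (snd x) * (case x of (x, y) \<Rightarrow> H (y, x))) \<in> borel_measurable (M \<Otimes>\<^sub>M lborel)
        \<longleftrightarrow> K \<in> borel_measurable (M \<Otimes>\<^sub>M lborel)"
      by (rule measurable_cong) (rule eq)
    then show ?thesis using prod by simp
  qed
  define Fn where "Fn \<omega> = (\<integral>\<^sup>+ r. ennreal (K (\<omega>, r)) \<partial>lborel)" for \<omega>
  have FnM: "Fn \<in> borel_measurable M"
    unfolding Fn_def by (rule lborel.borel_measurable_nn_integral_fst) (use KM in simp)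
  define IV where "IV \<omega> = set_lebesgue_integral lborel {0..T} (\<lambda>r. (sig r \<omega>)\<^sup>2 * lam r \<omega>)" for \<omega>
  have K_nonneg: "0 \<le> K (\<omega>, r)" if "\<omega> \<in> space M" for \<omega> r
  proof -
    have "0 \<le> (sig r \<omega>)\<^sup>2 * lam r \<omega>" if "0 \<le> r"
      using lam_pos[OF \<open>\<omega> \<in> space M\<close> that] by simp
    then show ?thesis unfolding K_def by (simp split: split_indicator)
  qed
  have IV_eq: "IV \<omega> = enn2real (Fn \<omega>)" if \<omega>: "\<omega> \<in> space M" for \<omega>
  proof -
    have "IV \<omega> = integral\<^sup>L lborel (\<lambda>r. K (\<omega>, r))"
      by (simp add: IV_def K_def set_lebesgue_integral_def)
    also have "\<dots> = enn2real (Fn \<omega>)" unfolding Fn_def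
      by (rule integral_eq_nn_integral[OF measurable_Pair2[OF KM \<omega>]]) (rule AE_I2, rule K_nonneg[OF \<omega>])
    finally show ?thesis .
  qed
  have IVM: "IV \<in> borel_measurable M"
  proof -
    have "IV \<in> borel_measurable M \<longleftrightarrow> (\<lambda>\<omega>. enn2real (Fn \<omega>)) \<in> borel_measurable M"
      by (rule measurable_cong) (rule IV_eq)
    moreover have "(\<lambda>\<omega>. enn2real (Fn \<omega>)) \<in> borel_measurable M"
      by (rule borel_measurable_enn2real[OF FnM])
    ultimately show ?thesis by simp
  qed
  have IV_nonneg: "0 \<le> IV \<omega>" if "\<omega> \<in> space M" for \<omega> using IV_eq[OF that] by simp
  have Fn_eq: "Fn \<omega> = (\<integral>\<^sup>+ r\<in>{0..T}. ennreal ((sig r \<omega>)\<^sup>2 * lam r \<omega>) \<partial>lborel)" for \<omega>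
    unfolding Fn_def K_def by (intro nn_integral_cong) (auto split: split_indicator)
  have Fn_eq2: "Fn \<omega> = (\<integral>\<^sup>+ r\<in>{0<..T}. ennreal ((sig r \<omega>)\<^sup>2 * lam r \<omega>) \<partial>lborel)" for \<omega>
    unfolding Fn_eq
  proof (rule nn_integral_cong_AE)
    show "AE r in lborel. ennreal ((sig r \<omega>)\<^sup>2 * lam r \<omega>) * indicator {0..T} r =
        ennreal ((sig r \<omega>)\<^sup>2 * lam r \<omega>) * indicator {0<..T} r"
      using AE_lborel_singleton[of "0::real"]
    proof (rule AE_mp)
      show "AE r in lborel. r \<noteq> 0 \<longrightarrow> ennreal ((sig r \<omega>)\<^sup>2 * lam r \<omega>) * indicator {0..T} r =
        ennreal ((sig r \<omega>)\<^sup>2 * lam r \<omega>) * indicator {0<..T} r"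
        by (rule AE_I2) (auto split: split_indicator)
    qed
  qed
  have intFn: "(\<integral>\<^sup>+ \<omega>. Fn \<omega> \<partial>M) = (\<integral>\<^sup>+ \<omega>. ennreal (S \<omega>) \<partial>M)"
    unfolding nnS Fn_eq2 ..
  have Fn_fin: "(\<integral>\<^sup>+ \<omega>. Fn \<omega> \<partial>M) < \<infinity>" using intFn Sfin by simp
  have AE_fin: "AE \<omega> in M. Fn \<omega> \<noteq> \<infinity>"
    by (rule nn_integral_PInf_AE[OF FnM]) (use Fn_fin in simp)
  have intIV: "(\<integral>\<^sup>+ \<omega>. ennreal (IV \<omega>) \<partial>M) = (\<integral>\<^sup>+ \<omega>. Fn \<omega> \<partial>M)"
  proof (rule nn_integral_cong_AE)
    show "AE \<omega> in M. ennreal (IV \<omega>) = Fn \<omega>"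
      using AE_fin
    proof (rule AE_mp)
      show "AE \<omega> in M. Fn \<omega> \<noteq> \<infinity> \<longrightarrow> ennreal (IV \<omega>) = Fn \<omega>"
      proof (rule AE_I2, rule impI)
        fix \<omega> assume "\<omega> \<in> space M" "Fn \<omega> \<noteq> \<infinity>"
        then show "ennreal (IV \<omega>) = Fn \<omega>" by (simp add: IV_eq less_top)
      qed
    qed
  qed
  have IVint: "integrable M IV"
  proof (rule integrableI_nonneg[OF IVM])
    show "AE x in M. 0 \<le> IV x" by (rule AE_I2) (rule IV_nonneg)
    show "(\<integral>\<^sup>+ x. ennreal (IV x) \<partial>M) < \<infinity>" using intIV Fn_fin by simp
  qed
  have EIV: "expectation IV = enn2real (\<integral>\<^sup>+ \<omega>. ennreal (S \<omega>) \<partial>M)"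
  proof -
    have "AE x in M. 0 \<le> IV x" by (rule AE_I2) (rule IV_nonneg)
    then have "expectation IV = enn2real (\<integral>\<^sup>+ x. ennreal (IV x) \<partial>M)"
      by (rule integral_eq_nn_integral[OF IVM])
    then show ?thesis using intIV intFn by simp
  qed
  have "expectation (\<lambda>\<omega>. (P T \<omega> - P 0 \<omega>)\<^sup>2 - IV \<omega>) = expectation (\<lambda>\<omega>. (A \<omega>)\<^sup>2 - IV \<omega>)"
  proof (rule Bochner_Integration.integral_cong[OF refl])
    fix \<omega> assume \<omega>: "\<omega> \<in> space M"
    have "P T \<omega> = P 0 \<omega> + A \<omega>" using P_def[OF \<omega> T order_refl] by (simp add: A_def)
    then show "(P T \<omega> - P 0 \<omega>)\<^sup>2 - IV \<omega> = (A \<omega>)\<^sup>2 - IV \<omega>" by simp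
  qed
  also have "\<dots> = expectation (\<lambda>\<omega>. (A \<omega>)\<^sup>2) - expectation IV"
    by (rule Bochner_Integration.integral_diff[OF A2int IVint])
  also have "\<dots> = 0" using EA2 EIV by simp
  finally show ?thesis by (simp add: IV_def)
qed

end
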